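(* Let $E\in\mathbb{R}$ and $M>0$, and consider the time-independent Schrödinger equation $$\mathcal{H}\Phi=E\Phi,\qquad \mathcal{H}=\mathcal{V}(x,X)-\frac{1}{2M}\Delta_X,$$ for $\Phi:\mathbb{R}^{3n}\times\mathbb{R}^{3N}\to\mathbb{C}$. Suppose $\theta:\mathbb{R}^{3N}\to\mathbb{R}$ is a smooth solution of the Hamilton–Jacobi (eikonal) equation $$H_S(X,\nabla_X\theta(X))=0,\qquad H_S(X,P):=\tfrac12|P|^2+V_0(X)-E,\qquad V_0(X):=\frac{\langle\hat\psi(\cdot,X),\mathcal{V}(\cdot,X)\hat\psi(\cdot,X)\rangle}{\langle\hat\psi(\cdot,X),\hat\psi(\cdot,X)\rangle},$$ with primal variable $X$ and dual variable $P=\nabla_X\theta(X)$. Let $(X_t,P_t)$ solve the Hamiltonian system $\dot X_t=P_t$, $\dot P_t=-\nabla_XV_0(X_t)$ (so $P_t=\nabla_X\theta(X_t)$), let $G_t$ satisfy $\frac{d}{dt}\log G_t=\frac12\Delta_X\theta(X_t)$, and set $\hat G(X_t):=G_t$. Let $\hat\psi(\cdot,X_t)=\psi_t$, where $\psi_t$ satisfies the transport equation $$iM^{-1/2}\dot\psi_t=(\mathcal{V}-V_0)\psi_t-\frac{G_t}{2M}\Delta_X\Big(\frac{\psi_t}{G_t}\Big)$$ (here $\Delta_X(\psi_t/G_t)$ means $\Delta_X$ applied to $X\mapsto\hat\psi(\cdot,X)/\hat G(X)$ evaluated at $X_t$). Then $$\Phi(x,X_t)=\hat G^{-1}(X_t)\,\hat\psi(x,X_t)\,e^{iM^{1/2}\theta(X_t)}$$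 solves $\mathcal{H}\Phi=E\Phi$.
   Context: Here $x\in\mathbb{R}^{3n}$ are electron coordinates and $X=(X^1,\dots,X^N)\in\mathbb{R}^{3N}$ nuclei coordinates; all nuclei have the same mass $M$, and $\Delta_X=\sum_{k=1}^N\Delta_{X^k}$. The electron Hamiltonian $\mathcal{V}(\cdot,X)$ is, for each fixed $X$, a self-adjoint operator on functions of $x$ (acting as multiplication on functions depending only on $X$). The bracket $\langle\phi,\psi\rangle(X):=\int_{\mathbb{R}^{3n}}\phi(x,X)^*\psi(x,X)\,dx$. *)

theory Defs
  imports "HOL-Analysis.Analysis"
begin

definition pd :: "'a::real_normed_vector \<Rightarrow> ('a \<Rightarrow> 'b::real_normed_vector) \<Rightarrow> 'a \<Rightarrow> 'b" where
  "pd v f X = vector_derivative (\<lambda>t. f (X + t *\<^sub>R v)) (at 0)"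

primrec iter_pd :: "'a::real_normed_vector list \<Rightarrow> ('a \<Rightarrow> 'b::real_normed_vector) \<Rightarrow> 'a \<Rightarrow> 'b" where
  "iter_pd [] f = f"
| "iter_pd (b # bs) f = pd b (iter_pd bs f)"

definition smooth :: "('a::euclidean_space \<Rightarrow> 'b::real_normed_vector) \<Rightarrow> bool" where
  "smooth f \<longleftrightarrow> (\<forall>bs. set bs \<subseteq> Basis \<longrightarrow> (\<forall>X. iter_pd bs f differentiable (at X)))"

definition grad :: "('a::euclidean_space \<Rightarrow> real) \<Rightarrow> 'a \<Rightarrow> 'a" where
  "grad f X = (\<Sum>b\<in>Basis. pd b f X *\<^sub>R b)"

definition lap :: "('a::euclidean_space \<Rightarrow> 'b::real_normed_vector) \<Rightarrow> 'a \<Rightarrow> 'b" where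
  "lap f X = (\<Sum>b\<in>Basis. pd b (pd b f) X)"

definition br :: "('e::euclidean_space \<Rightarrow> complex) \<Rightarrow> ('e \<Rightarrow> complex) \<Rightarrow> complex" where
  "br \<phi> \<psi> = (\<integral>x. cnj (\<phi> x) * \<psi> x \<partial>lborel)"

definition V0 :: "('N \<Rightarrow> ('e::euclidean_space \<Rightarrow> complex) \<Rightarrow> ('e \<Rightarrow> complex))
                  \<Rightarrow> ('N \<Rightarrow> 'e \<Rightarrow> complex) \<Rightarrow> 'N \<Rightarrow> complex" where
  "V0 \<V> \<psi> X = br (\<psi> X) (\<V> X (\<psi> X)) / br (\<psi> X) (\<psi> X)"

definition HS :: "('N::euclidean_space \<Rightarrow> complex) \<Rightarrow> real \<Rightarrow> 'N \<Rightarrow> 'N \<Rightarrow> complex" where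
  "HS v0 E X P = complex_of_real ((norm P)\<^sup>2 / 2) + v0 X - complex_of_real E"

definition Ham :: "('N::euclidean_space \<Rightarrow> ('e \<Rightarrow> complex) \<Rightarrow> ('e \<Rightarrow> complex)) \<Rightarrow> real
                   \<Rightarrow> ('e \<Rightarrow> 'N \<Rightarrow> complex) \<Rightarrow> 'e \<Rightarrow> 'N \<Rightarrow> complex" where
  "Ham \<V> M \<Phi> x X = \<V> X (\<lambda>y. \<Phi> y X) x - complex_of_real (1 / (2 * M)) * lap (\<lambda>Z. \<Phi> x Z) X"

(* The electron Hamiltonian V(.,X): for each X a linear, symmetric operator defined on a
   linear domain D X of square-integrable functions of x (model of "self-adjoint"). *)
definition sym_op :: "(('e::euclidean_space \<Rightarrow> complex) set) \<Rightarrow> (('e \<Rightarrow> complex) \<Rightarrow> ('e \<Rightarrow> complex)) \<Rightarrow> bool" where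
  "sym_op D T \<longleftrightarrow>
     (\<forall>\<phi>\<in>D. \<phi> \<in> borel_measurable lborel \<and> integrable lborel (\<lambda>x. (norm (\<phi> x))\<^sup>2)) \<and>
     (\<forall>\<phi>\<in>D. \<forall>\<psi>\<in>D. \<forall>c. (\<lambda>x. c * \<phi> x + \<psi> x) \<in> D \<and>
                       T (\<lambda>x. c * \<phi> x + \<psi> x) = (\<lambda>x. c * T \<phi> x + T \<psi> x)) \<and>
     (\<forall>\<phi>\<in>D. \<forall>\<psi>\<in>D. br \<phi> (T \<psi>) = br (T \<phi>) \<psi>)"

end

theory Submission
  imports Defs
begin

lemma pd_hd:
  assumes "(f has_derivative f') (at X)"
  shows "pd v f X = f' v"
proof -
  have l: "linear f'" using assms has_derivative_linear by blast
  have 1: "((\<lambda>t::real. X + t *\<^sub>R v) has_derivative (\<lambda>t. t *\<^sub>R v)) (at 0)"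
    by (auto intro!: derivative_eq_intros)
  have 2: "(f has_derivative f') (at (X + 0 *\<^sub>R v))" using assms by simp
  have "((f \<circ> (\<lambda>t. X + t *\<^sub>R v)) has_derivative (f' \<circ> (\<lambda>t. t *\<^sub>R v))) (at 0)"
    using diff_chain_at[OF 1 2] .
  moreover have "f' \<circ> (\<lambda>t. t *\<^sub>R v) = (\<lambda>t. t *\<^sub>R f' v)"
    using l by (auto simp: linear_scale)
  ultimately have "((\<lambda>t. f (X + t *\<^sub>R v)) has_vector_derivative f' v) (at 0)"
    by (simp add: has_vector_derivative_def o_def)
  then show ?thesis unfolding pd_def by (rule vector_derivative_at)
qed

lemma pd_mult:
  fixes f g :: "'a::real_normed_vector \<Rightarrow> complex"
  assumes "f differentiable (at X)" "g differentiable (at X)"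
  shows "pd v (\<lambda>Y. f Y * g Y) X = pd v f X * g X + f X * pd v g X"
proof -
  obtain f' g' where f: "(f has_derivative f') (at X)" and g: "(g has_derivative g') (at X)"
    using assms unfolding differentiable_def by blast
  have "((\<lambda>Y. f Y * g Y) has_derivative (\<lambda>h. f X * g' h + f' h * g X)) (at X)"
    using has_derivative_mult[OF f g] .
  then show ?thesis using pd_hd[OF f] pd_hd[OF g] pd_hd by (simp add: algebra_simps)
qed

lemma pd_div:
  fixes f :: "'a::real_normed_vector \<Rightarrow> complex" and g :: "'a \<Rightarrow> real"
  assumes "f differentiable (at X)" "g differentiable (at X)" "g X \<noteq> 0"
  shows "pd v (\<lambda>Y. f Y / complex_of_real (g Y)) X
     = (pd v f X * complex_of_real (g X) - f X * complex_of_real (pd v g X)) / complex_of_real (g X)^2"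
proof -
  obtain f' g' where f: "(f has_derivative f') (at X)" and g: "(g has_derivative g') (at X)"
    using assms unfolding differentiable_def by blast
  have gc: "((\<lambda>Y. complex_of_real (g Y)) has_derivative (\<lambda>h. complex_of_real (g' h))) (at X)"
    using bounded_linear.has_derivative[OF bounded_linear_of_real g] .
  have "((\<lambda>Y. f Y / complex_of_real (g Y)) has_derivative
     (\<lambda>h. - (f X * (inverse (complex_of_real (g X)) * complex_of_real (g' h) * inverse (complex_of_real (g X)))) + f' h / complex_of_real (g X))) (at X)"
    using has_derivative_divide[OF f gc] assms(3) by simp
  from pd_hd[OF this, of v] show ?thesis using pd_hd[OF f] pd_hd[OF g] assms(3)
    by (simp add: field_simps power2_eq_square)
qed

lemma pd_cexp:
  fixes g :: "'a::real_normed_vector \<Rightarrow> real"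
  assumes "g differentiable (at X)"
  shows "pd v (\<lambda>Y. exp (\<i> * complex_of_real (c * g Y))) X
     = \<i> * complex_of_real (c * pd v g X) * exp (\<i> * complex_of_real (c * g X))"
proof -
  obtain g' where g: "(g has_derivative g') (at X)"
    using assms unfolding differentiable_def by blast
  have gc: "((\<lambda>Y. complex_of_real (g Y)) has_derivative (\<lambda>h. complex_of_real (g' h))) (at X)"
    using bounded_linear.has_derivative[OF bounded_linear_of_real g] .
  have k: "((\<lambda>Y. \<i> * complex_of_real c * complex_of_real (g Y)) has_derivative (\<lambda>h. \<i> * complex_of_real c * complex_of_real (g' h))) (at X)"
    using has_derivative_mult_right[OF gc] .
  have "((\<lambda>Y. exp (\<i> * complex_of_real c * complex_of_real (g Y))) has_derivative
     (\<lambda>h. exp (\<i> * complex_of_real c * complex_of_real (g X)) * (\<i> * complex_of_real c * complex_of_real (g' h)))) (at X)"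
  proof -
    have e: "(exp has_derivative (*) (exp (\<i> * complex_of_real c * complex_of_real (g X)))) (at (\<i> * complex_of_real c * complex_of_real (g X)))"
      using DERIV_exp[unfolded has_field_derivative_def] by blast
    show ?thesis using diff_chain_at[OF k e] by (simp add: o_def algebra_simps)
  qed
  from pd_hd[OF this, of v] show ?thesis using pd_hd[OF g] by (simp add: algebra_simps)
qed

lemma pd_linof:
  fixes g :: "'a::real_normed_vector \<Rightarrow> real"
  assumes "g differentiable (at X)"
  shows "pd v (\<lambda>Y. a * complex_of_real (c * g Y)) X = a * complex_of_real (c * pd v g X)"
proof -
  obtain g' where g: "(g has_derivative g') (at X)"
    using assms unfolding differentiable_def by blast
  have gc: "((\<lambda>Y. complex_of_real (g Y)) has_derivative (\<lambda>h. complex_of_real (g' h))) (at X)"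
    using bounded_linear.has_derivative[OF bounded_linear_of_real g] .
  have "((\<lambda>Y. a * complex_of_real c * complex_of_real (g Y)) has_derivative
     (\<lambda>h. a * complex_of_real c * complex_of_real (g' h))) (at X)"
    using has_derivative_mult_right[OF gc] .
  from pd_hd[OF this, of v] show ?thesis using pd_hd[OF g] by (simp add: algebra_simps)
qed

lemma chain_pd:
  fixes f :: "'a::euclidean_space \<Rightarrow> 'b::real_normed_vector"
  assumes "f differentiable (at (X t))" "(X has_vector_derivative v) (at t)"
  shows "((\<lambda>s. f (X s)) has_vector_derivative (\<Sum>b\<in>Basis. (v \<bullet> b) *\<^sub>R pd b f (X t))) (at t)"
proof -
  obtain f' where f: "(f has_derivative f') (at (X t))"
    using assms unfolding differentiable_def by blast
  have l: "linear f'" using f has_derivative_linear by blast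
  have "((f \<circ> X) has_vector_derivative f' v) (at t)"
    using vector_derivative_diff_chain_within[OF assms(2) has_derivative_at_withinI[OF f]] by simp
  moreover have "f' v = (\<Sum>b\<in>Basis. (v \<bullet> b) *\<^sub>R f' b)"
    using l by (metis (no_types, lifting) euclidean_representation linear_scale linear_sum sum.cong)
  ultimately show ?thesis using pd_hd[OF f] by (simp add: o_def)
qed

lemma smooth_d: "smooth f \<Longrightarrow> f differentiable (at Z)"
  unfolding smooth_def by (metis empty_subsetI iter_pd.simps(1) list.set(1))

lemma smooth_d1: "smooth f \<Longrightarrow> b \<in> Basis \<Longrightarrow> pd b f differentiable (at Z)"
  unfolding smooth_def
  by (metis empty_subsetI insert_subset iter_pd.simps list.set)

lemma dof: fixes g :: "'a::real_normed_vector \<Rightarrow> real"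
  shows "g differentiable (at X) \<Longrightarrow> (\<lambda>Y. complex_of_real (g Y)) differentiable (at X)"
  unfolding differentiable_def
  using bounded_linear.has_derivative[OF bounded_linear_of_real] by blast

lemma dexp: fixes g :: "'a::real_normed_vector \<Rightarrow> real"
  assumes "g differentiable (at X)"
  shows "(\<lambda>Y. exp (\<i> * complex_of_real (c * g Y))) differentiable (at X)"
proof -
  have k: "(\<lambda>Y. \<i> * complex_of_real c * complex_of_real (g Y)) differentiable (at X)"
    using dof[OF assms] by (auto intro!: derivative_intros)
  have e: "exp differentiable (at (\<i> * complex_of_real c * complex_of_real (g X)))"
    using DERIV_exp[unfolded has_field_derivative_def] differentiable_def by blast
  show ?thesis using differentiable_chain_at[OF k e] by (simp add: o_def mult.assoc)
qed

lemma pd_add: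
  fixes f g :: "'a::real_normed_vector \<Rightarrow> complex"
  assumes "f differentiable (at X)" "g differentiable (at X)"
  shows "pd v (\<lambda>Y. f Y + g Y) X = pd v f X + pd v g X"
proof -
  obtain f' g' where f: "(f has_derivative f') (at X)" and g: "(g has_derivative g') (at X)"
    using assms unfolding differentiable_def by blast
  from pd_hd[OF has_derivative_add[OF f g], of v] show ?thesis using pd_hd[OF f] pd_hd[OF g] by simp
qed

lemma sym_scale:
  assumes "sym_op D T" "\<phi> \<in> D"
  shows "T (\<lambda>y. c * \<phi> y) = (\<lambda>y. c * T \<phi> y)"
proof -
  have lin: "\<And>\<phi> \<psi> c. \<phi> \<in> D \<Longrightarrow> \<psi> \<in> D \<Longrightarrow> (\<lambda>x. c * \<phi> x + \<psi> x) \<in> D \<and>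
                       T (\<lambda>x. c * \<phi> x + \<psi> x) = (\<lambda>x. c * T \<phi> x + T \<psi> x)"
    using assms(1) unfolding sym_op_def by blast
  have z: "(\<lambda>x. 0) \<in> D" using lin[OF assms(2) assms(2), of "-1"] by simp
  have "T (\<lambda>x. 0) = (\<lambda>x. T (\<lambda>x. 0) x + T (\<lambda>x. 0) x)" using lin[OF z z, of 1] by simp
  hence T0: "T (\<lambda>x. 0) = (\<lambda>x. 0)" by (metis add_cancel_left_left)
  show ?thesis using lin[OF assms(2) z, of c] T0 by simp
qed

lemma grad_inner: "b \<in> Basis \<Longrightarrow> grad f Y \<bullet> b = pd b f Y"
  unfolding grad_def by (simp add: inner_sum_left inner_Basis if_distrib sum.delta cong: if_cong)

lemma norm_grad: "(norm (grad f Y))\<^sup>2 = (\<Sum>b\<in>Basis. (pd b f Y)\<^sup>2)"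
proof -
  have "(norm (grad f Y))\<^sup>2 = (\<Sum>b\<in>Basis. (grad f Y \<bullet> b) * (grad f Y \<bullet> b))"
    by (metis power2_norm_eq_inner euclidean_inner)
  also have "\<dots> = (\<Sum>b\<in>Basis. (pd b f Y)\<^sup>2)"
    by (rule sum.cong) (auto simp: grad_inner power2_eq_square)
  finally show ?thesis .
qed

lemma alg:
  fixes G S M e0 \<psi>0 Vp V0 E Q A Lu Lt dp L :: complex
  assumes "G \<noteq> 0" "S \<noteq> 0" "M = S * S"
    and "\<i> * (1 / S) * dp = Vp - V0 * \<psi>0 - (G / (2 * M)) * Lu"
    and "Q / 2 + V0 - E = 0"
    and "A = (dp * G - \<psi>0 * (G * Lt / 2)) / G^2"
    and "L = e0 * (Lu + 2 * \<i> * S * A + \<i> * S * Lt * (\<psi>0 / G) - M * Q * (\<psi>0 / G))"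
  shows "(1 / G) * e0 * Vp - (1 / (2 * M)) * L = E * ((1 / G) * \<psi>0 * e0)"
proof -
  have Vp: "Vp = \<i> * (1 / S) * dp + V0 * \<psi>0 + (G / (2 * M)) * Lu" using assms(4) by (simp add: algebra_simps)
  have V0: "V0 = E - Q/2" using assms(5) by (simp add: algebra_simps)
  show ?thesis unfolding Vp V0 assms(7) assms(6) assms(3) using assms(1,2)
    by (simp add: field_simps power2_eq_square)
qed

theorem theorem3p1:
  fixes E M :: real
    and \<V> :: "real^3^'N \<Rightarrow> (real^3^'n \<Rightarrow> complex) \<Rightarrow> (real^3^'n \<Rightarrow> complex)"
    and D :: "real^3^'N \<Rightarrow> (real^3^'n \<Rightarrow> complex) set"
    and \<theta> :: "real^3^'N \<Rightarrow> real"
    and \<psi> :: "real^3^'N \<Rightarrow> real^3^'n \<Rightarrow> complex"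
    and Ghat :: "real^3^'N \<Rightarrow> real"
    and T :: "real set"
    and X P :: "real \<Rightarrow> real^3^'N"
    and G :: "real \<Rightarrow> real"
  assumes M_pos: "M > 0"
    and op: "\<And>Y. sym_op (D Y) (\<V> Y)"
    and psi_dom: "\<And>Y. \<psi> Y \<in> D Y"
    and theta_smooth: "smooth \<theta>"
    and psi_smooth: "\<And>x. smooth (\<lambda>Y. \<psi> Y x)"
    and Ghat_smooth: "smooth Ghat"
    and Ghat_pos: "\<And>Y. Ghat Y > 0"
    and eikonal: "\<And>Y. HS (V0 \<V> \<psi>) E Y (grad \<theta> Y) = 0"
    and T_open: "open T"
    and X_dot: "\<And>t. t \<in> T \<Longrightarrow> (X has_vector_derivative P t) (at t)"
    and P_dot: "\<And>t. t \<in> T \<Longrightarrow> (P has_vector_derivative - grad (\<lambda>Y. Re (V0 \<V> \<psi> Y)) (X t)) (at t)"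
    and P_grad: "\<And>t. t \<in> T \<Longrightarrow> P t = grad \<theta> (X t)"
    and G_pos: "\<And>t. t \<in> T \<Longrightarrow> G t > 0"
    and G_log: "\<And>t. t \<in> T \<Longrightarrow> ((\<lambda>s. ln (G s)) has_real_derivative (lap \<theta> (X t) / 2)) (at t)"
    and Ghat_G: "\<And>t. t \<in> T \<Longrightarrow> Ghat (X t) = G t"
    and transport: "\<And>t x. t \<in> T \<Longrightarrow>
        \<i> * complex_of_real (1 / sqrt M) * vector_derivative (\<lambda>s. \<psi> (X s) x) (at t)
        = \<V> (X t) (\<psi> (X t)) x - V0 \<V> \<psi> (X t) * \<psi> (X t) x
          - complex_of_real (G t / (2 * M)) * lap (\<lambda>Y. \<psi> Y x / complex_of_real (Ghat Y)) (X t)"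
  shows "\<forall>t\<in>T. \<forall>x.
           Ham \<V> M (\<lambda>y Y. complex_of_real (1 / Ghat Y) * \<psi> Y y * exp (\<i> * complex_of_real (sqrt M * \<theta> Y))) x (X t)
         = complex_of_real E * (complex_of_real (1 / Ghat (X t)) * \<psi> (X t) x * exp (\<i> * complex_of_real (sqrt M * \<theta> (X t))))"
  proof (intro ballI allI)
  fix t x assume tT: "t \<in> T"
  define S where "S = sqrt M"
  have S_pos: "S > 0" and SS: "S * S = M" using M_pos by (auto simp: S_def)
  define X0 where "X0 = X t"
  define \<psi>x where "\<psi>x = (\<lambda>Y. \<psi> Y x)"
  define u where "u = (\<lambda>Y. \<psi> Y x / complex_of_real (Ghat Y))"
  define e where "e = (\<lambda>Y. exp (\<i> * complex_of_real (S * \<theta> Y)))"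
  have Gnz: "\<And>Y. Ghat Y \<noteq> 0" using Ghat_pos by (metis less_irrefl)
  have d\<theta>: "\<And>Z. \<theta> differentiable (at Z)" and d\<theta>1: "\<And>Z b. b \<in> Basis \<Longrightarrow> pd b \<theta> differentiable (at Z)"
    using smooth_d[OF theta_smooth] smooth_d1[OF theta_smooth] by auto
  have dG: "\<And>Z. Ghat differentiable (at Z)" and dG1: "\<And>Z b. b \<in> Basis \<Longrightarrow> pd b Ghat differentiable (at Z)"
    using smooth_d[OF Ghat_smooth] smooth_d1[OF Ghat_smooth] by auto
  have d\<psi>: "\<And>Z. \<psi>x differentiable (at Z)" and d\<psi>1: "\<And>Z b. b \<in> Basis \<Longrightarrow> pd b \<psi>x differentiable (at Z)"
    using smooth_d[OF psi_smooth] smooth_d1[OF psi_smooth] unfolding \<psi>x_def by auto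
  have du: "\<And>Z. u differentiable (at Z)"
    unfolding u_def using d\<psi>[unfolded \<psi>x_def] dof[OF dG] Gnz by (auto intro!: derivative_intros)
  have pdu: "\<And>b. pd b u = (\<lambda>Z. (pd b \<psi>x Z * complex_of_real (Ghat Z) - \<psi>x Z * complex_of_real (pd b Ghat Z)) / complex_of_real (Ghat Z)^2)"
    unfolding u_def using pd_div[OF d\<psi>[unfolded \<psi>x_def] dG Gnz] unfolding \<psi>x_def by auto
  have du1: "\<And>Z b. b \<in> Basis \<Longrightarrow> pd b u differentiable (at Z)"
    unfolding pdu using d\<psi> d\<psi>1 dof[OF dG] dof[OF dG1] Gnz by (auto intro!: derivative_intros)
  have de: "\<And>Z. e differentiable (at Z)" unfolding e_def using dexp[OF d\<theta>] .
  have pde: "\<And>b Z. pd b e Z = \<i> * complex_of_real (S * pd b \<theta> Z) * e Z"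
    unfolding e_def using pd_cexp[OF d\<theta>] .
  define f1 where "f1 = (\<lambda>b Z. \<i> * complex_of_real (S * pd b \<theta> Z))"
  have df1: "\<And>Z b. b \<in> Basis \<Longrightarrow> f1 b differentiable (at Z)"
    unfolding f1_def using dof[OF d\<theta>1] by (auto intro!: derivative_intros)
  have pdf1: "\<And>Z b. b \<in> Basis \<Longrightarrow> pd b (f1 b) Z = \<i> * complex_of_real (S * pd b (pd b \<theta>) Z)"
    unfolding f1_def using pd_linof[OF d\<theta>1] by blast
  have Phi_eq: "(\<lambda>Z. complex_of_real (1 / Ghat Z) * \<psi> Z x * exp (\<i> * complex_of_real (sqrt M * \<theta> Z))) = (\<lambda>Z. u Z * e Z)"
    unfolding u_def e_def S_def by (auto simp: field_simps)
  have pdPhi: "\<And>b. pd b (\<lambda>Z. u Z * e Z) = (\<lambda>Z. pd b u Z * e Z + u Z * (f1 b Z * e Z))"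
    using pd_mult[OF du de] pde unfolding f1_def by auto
  have pd2: "\<And>b. b \<in> Basis \<Longrightarrow> pd b (pd b (\<lambda>Z. u Z * e Z)) X0 =
      e X0 * (pd b (pd b u) X0 + 2 * f1 b X0 * pd b u X0 + u X0 * (\<i> * complex_of_real (S * pd b (pd b \<theta>) X0)) + u X0 * f1 b X0 * f1 b X0)"
  proof -
    fix b :: "real^3^'N" assume b: "b \<in> Basis"
    have d1: "(\<lambda>Z. pd b u Z * e Z) differentiable (at X0)" using du1[OF b] de by (auto intro!: derivative_intros)
    have d2: "(\<lambda>Z. u Z * (f1 b Z * e Z)) differentiable (at X0)" using du df1[OF b] de by (auto intro!: derivative_intros)
    have d3: "(\<lambda>Z. f1 b Z * e Z) differentiable (at X0)" using df1[OF b] de by (auto intro!: derivative_intros)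
    show "?thesis b"
      unfolding pdPhi pd_add[OF d1 d2] pd_mult[OF du1[OF b] de] pd_mult[OF du d3] pd_mult[OF df1[OF b] de] pdf1[OF b] pde
      by (simp add: f1_def algebra_simps)
  qed
  show "Ham \<V> M (\<lambda>y Y. complex_of_real (1 / Ghat Y) * \<psi> Y y * exp (\<i> * complex_of_real (sqrt M * \<theta> Y))) x (X t)
         = complex_of_real E * (complex_of_real (1 / Ghat (X t)) * \<psi> (X t) x * exp (\<i> * complex_of_real (sqrt M * \<theta> (X t))))"
    (is "?L = ?R")
  proof -
    define a where "a = (\<lambda>b. pd b \<theta> X0)"
    define A where "A = (\<Sum>b\<in>Basis. complex_of_real (a b) * pd b u X0)"
    define Q where "Q = (\<Sum>b\<in>Basis. (a b)\<^sup>2)"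
    define dp where "dp = vector_derivative (\<lambda>s. \<psi> (X s) x) (at t)"
    have Pb: "\<And>b. b \<in> Basis \<Longrightarrow> P t \<bullet> b = a b"
      unfolding a_def X0_def using P_grad[OF tT] grad_inner by metis
    have GX: "Ghat X0 = G t" unfolding X0_def using Ghat_G[OF tT] .
    have "((\<lambda>s. \<psi>x (X s)) has_vector_derivative (\<Sum>b\<in>Basis. (P t \<bullet> b) *\<^sub>R pd b \<psi>x (X t))) (at t)"
      using chain_pd[OF d\<psi> X_dot[OF tT]] .
    hence dp_eq: "dp = (\<Sum>b\<in>Basis. complex_of_real (a b) * pd b \<psi>x X0)"
      unfolding dp_def \<psi>x_def X0_def using Pb
      by (simp add: vector_derivative_at scaleR_conv_of_real X0_def[symmetric] cong: sum.cong)
    have "((\<lambda>s. exp (ln (G s))) has_real_derivative exp (ln (G t)) * (lap \<theta> (X t) / 2)) (at t)"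
      by (rule DERIV_chain2[OF DERIV_exp G_log[OF tT]])
    hence "(G has_real_derivative exp (ln (G t)) * (lap \<theta> (X t) / 2)) (at t)"
      by (rule has_field_derivative_transform_within_open[OF _ T_open tT]) (simp add: G_pos)
    hence Gd1: "(G has_real_derivative G t * (lap \<theta> X0 / 2)) (at t)"
      using G_pos[OF tT] unfolding X0_def by simp
    have "((\<lambda>s. Ghat (X s)) has_vector_derivative (\<Sum>b\<in>Basis. (P t \<bullet> b) *\<^sub>R pd b Ghat (X t))) (at t)"
      using chain_pd[OF dG X_dot[OF tT]] .
    hence "((\<lambda>s. Ghat (X s)) has_real_derivative (\<Sum>b\<in>Basis. a b * pd b Ghat X0)) (at t)"
      using Pb unfolding X0_def by (simp add: has_real_derivative_iff_has_vector_derivative X0_def[symmetric] cong: sum.cong)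
    hence Gd2: "(G has_real_derivative (\<Sum>b\<in>Basis. a b * pd b Ghat X0)) (at t)"
      by (rule has_field_derivative_transform_within_open[OF _ T_open tT]) (simp add: Ghat_G)
    have sGd: "(\<Sum>b\<in>Basis. a b * pd b Ghat X0) = G t * (lap \<theta> X0 / 2)"
      using DERIV_unique[OF Gd2 Gd1] .
    have "A = (\<Sum>b\<in>Basis. (complex_of_real (a b) * pd b \<psi>x X0 * complex_of_real (Ghat X0)
                 - \<psi>x X0 * complex_of_real (a b * pd b Ghat X0)) / complex_of_real (Ghat X0)^2)"
      unfolding A_def pdu by (rule sum.cong) (auto simp: field_simps)
    also have "\<dots> = (dp * complex_of_real (G t) - \<psi>x X0 * (complex_of_real (G t) * complex_of_real (lap \<theta> X0) / 2)) / complex_of_real (G t)^2"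
      unfolding dp_eq GX[symmetric] sum_divide_distrib[symmetric] sum_subtractf
        sum_distrib_right[symmetric] sum_distrib_left[symmetric] of_real_sum[symmetric] sGd
      by (simp add: GX)
    finally have A_eq: "A = \<dots>" .
    have "lap (\<lambda>Z. u Z * e Z) X0 = (\<Sum>b\<in>Basis. e X0 * (pd b (pd b u) X0 + 2 * \<i> * complex_of_real S * (complex_of_real (a b) * pd b u X0)
        + \<i> * complex_of_real S * complex_of_real (pd b (pd b \<theta>) X0) * u X0 - complex_of_real M * complex_of_real ((a b)\<^sup>2) * u X0))"
      unfolding lap_def
    proof (rule sum.cong)
      fix b :: "real^3^'N" assume b: "b \<in> Basis"
      show "pd b (pd b (\<lambda>Z. u Z * e Z)) X0 = e X0 * (pd b (pd b u) X0 + 2 * \<i> * complex_of_real S * (complex_of_real (a b) * pd b u X0)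
        + \<i> * complex_of_real S * complex_of_real (pd b (pd b \<theta>) X0) * u X0 - complex_of_real M * complex_of_real ((a b)\<^sup>2) * u X0)"
        unfolding pd2[OF b] f1_def a_def SS[symmetric]
        by (simp add: algebra_simps power2_eq_square)
    qed simp
    also have "\<dots> = e X0 * (lap u X0 + 2 * \<i> * complex_of_real S * A + \<i> * complex_of_real S * complex_of_real (lap \<theta> X0) * u X0
        - complex_of_real M * complex_of_real Q * u X0)"
      unfolding lap_def A_def Q_def
      by (simp add: sum.distrib sum_subtractf sum_distrib_left sum_distrib_right algebra_simps)
    finally have lapPhi: "lap (\<lambda>Z. u Z * e Z) X0 = \<dots>" .
    have Vfun: "(\<lambda>y. complex_of_real (1 / Ghat X0) * \<psi> X0 y * exp (\<i> * complex_of_real (sqrt M * \<theta> X0)))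
        = (\<lambda>y. (complex_of_real (1 / Ghat X0) * e X0) * \<psi> X0 y)"
      unfolding e_def S_def by (auto simp: algebra_simps)
    have Vpart: "\<V> X0 (\<lambda>y. complex_of_real (1 / Ghat X0) * \<psi> X0 y * exp (\<i> * complex_of_real (sqrt M * \<theta> X0))) x
        = (complex_of_real (1 / Ghat X0) * e X0) * \<V> X0 (\<psi> X0) x"
      unfolding Vfun sym_scale[OF op psi_dom] by simp
    have eik: "complex_of_real Q / 2 + V0 \<V> \<psi> X0 - complex_of_real E = 0"
      using eikonal[of X0] unfolding HS_def norm_grad Q_def a_def by simp
    have tr: "\<i> * (1 / complex_of_real S) * dp = \<V> X0 (\<psi> X0) x - V0 \<V> \<psi> X0 * \<psi>x X0
          - (complex_of_real (G t) / (2 * complex_of_real M)) * lap u X0"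
      using transport[OF tT, of x] unfolding dp_def S_def X0_def \<psi>x_def u_def by simp
    have "?L = \<V> X0 (\<lambda>y. complex_of_real (1 / Ghat X0) * \<psi> X0 y * exp (\<i> * complex_of_real (sqrt M * \<theta> X0))) x
        - complex_of_real (1 / (2 * M)) * lap (\<lambda>Z. complex_of_real (1 / Ghat Z) * \<psi> Z x * exp (\<i> * complex_of_real (sqrt M * \<theta> Z))) X0"
      unfolding Ham_def X0_def by (rule refl)
    also have "\<dots> = (1 / complex_of_real (G t)) * e X0 * \<V> X0 (\<psi> X0) x - (1 / (2 * complex_of_real M)) * lap (\<lambda>Z. u Z * e Z) X0"
      unfolding Vpart Phi_eq unfolding GX by simp
    also have "\<dots> = complex_of_real E * ((1 / complex_of_real (G t)) * \<psi>x X0 * e X0)"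
    proof (rule alg)
      show "complex_of_real (G t) \<noteq> 0" using G_pos[OF tT] by simp
      show "complex_of_real S \<noteq> 0" using S_pos by simp
      show "complex_of_real M = complex_of_real S * complex_of_real S" using SS by (metis of_real_mult)
      show "\<i> * (1 / complex_of_real S) * dp = \<V> X0 (\<psi> X0) x - V0 \<V> \<psi> X0 * \<psi>x X0
          - (complex_of_real (G t) / (2 * complex_of_real M)) * lap u X0" by (rule tr)
      show "complex_of_real Q / 2 + V0 \<V> \<psi> X0 - complex_of_real E = 0" by (rule eik)
      show "A = (dp * complex_of_real (G t) - \<psi>x X0 * (complex_of_real (G t) * complex_of_real (lap \<theta> X0) / 2)) / complex_of_real (G t)^2"
        by (rule A_eq)
      show "lap (\<lambda>Z. u Z * e Z) X0 = e X0 * (lap u X0 + 2 * \<i> * complex_of_real S * A + \<i> * complex_of_real S * complex_of_real (lap \<theta> X0) * (\<psi>x X0 / complex_of_real (G t))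
        - complex_of_real M * complex_of_real Q * (\<psi>x X0 / complex_of_real (G t)))"
        unfolding lapPhi by (simp add: u_def \<psi>x_def GX)
    qed
    also have "\<dots> = ?R" unfolding X0_def[symmetric] e_def S_def \<psi>x_def GX by simp
    finally show ?thesis .
  qed
qed

end
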